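(* Let $N\ge1$ and let $q,\gamma,s_0,\xi_0$ be generic nonzero complex numbers; set $u_0=(s_0\xi_0\gamma)^{-1}$. Define $$\mathsf z(u,v)=\frac{(1-\gamma)(q-\gamma s_0^2)(1-uv)+(1-q)(1-\gamma\xi_0s_0u)(1-\gamma\xi_0^{-1}s_0v)}{(1-uv)(1-quv)}.$$ Then, with $u_i=u_0q^{i-1}$ for $i=1,\dots,N$ and generic $v_1,\dots,v_N$, $$\frac{\prod_{i,j=1}^N(1-u_iv_j)(1-qu_iv_j)}{\prod_{1\le i<j\le N}(u_i-u_j)(v_i-v_j)}\det[\mathsf z(u_i,v_j)]_{i,j=1}^N=q^{N^2}\prod_{i,j=1}^N\Big(1-v_i\frac{q^{j-1}}{s_0\xi_0\gamma}\Big)\prod_{j=1}^N(1-\gamma q^{-j+1})(1-s_0^2\gamma q^{-j}).$$ *)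

theory Defs
  imports Complex_Main "Jordan_Normal_Form.Determinant"
begin

definition zfun :: "complex \<Rightarrow> complex \<Rightarrow> complex \<Rightarrow> complex \<Rightarrow> complex \<Rightarrow> complex \<Rightarrow> complex" where
  "zfun q \<gamma> s0 \<xi>0 u v =
     ((1 - \<gamma>) * (q - \<gamma> * s0\<^sup>2) * (1 - u * v)
      + (1 - q) * (1 - \<gamma> * \<xi>0 * s0 * u) * (1 - \<gamma> * inverse \<xi>0 * s0 * v))
     / ((1 - u * v) * (1 - q * u * v))"

end

theory Submission
  imports Defs
begin

lemma aux1:
  fixes x z y :: "'a::field"
  assumes a: "1 - x * y \<noteq> 0" and b: "1 - z * y \<noteq> 0"
  shows "1 / (1 - x * y) + - 1 * (1 / (1 - z * y)) = (x - z) * (1 / (1 - z * y)) * (y / (1 - x * y))"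
proof -
  have "1 / (1 - x * y) + - 1 * (1 / (1 - z * y)) = 1 / (1 - x * y) - 1 / (1 - z * y)" by simp
  also have "\<dots> = (1 * (1 - z * y) - 1 * (1 - x * y)) / ((1 - x * y) * (1 - z * y))"
    by (rule diff_frac_eq[OF a b])
  also have "1 * (1 - z * y) - 1 * (1 - x * y) = (x - z) * y" by (simp add: algebra_simps)
  also have "(x - z) * y / ((1 - x * y) * (1 - z * y)) = (x - z) * (1 / (1 - z * y)) * (y / (1 - x * y))"
    by (simp add: mult.commute)
  finally show ?thesis .
qed
lemma aux2:
  fixes x w y :: "'a::field"
  assumes a: "1 - x * y \<noteq> 0" and b: "1 - x * w \<noteq> 0"
  shows "y / (1 - x * y) + - 1 * (w / (1 - x * w)) = 1 / (1 - x * w) * (y - w) * (1 / (1 - x * y))"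
proof -
  have "y / (1 - x * y) + - 1 * (w / (1 - x * w)) = y / (1 - x * y) - w / (1 - x * w)" by simp
  also have "\<dots> = (y * (1 - x * w) - w * (1 - x * y)) / ((1 - x * y) * (1 - x * w))"
    by (rule diff_frac_eq[OF a b])
  also have "y * (1 - x * w) - w * (1 - x * y) = y - w" by (simp add: algebra_simps)
  also have "(y - w) / ((1 - x * y) * (1 - x * w)) = 1 / (1 - x * w) * (y - w) * (1 / (1 - x * y))"
    by (simp add: mult.commute)
  finally show ?thesis .
qed


lemma det_scale:
  fixes a b :: "nat \<Rightarrow> 'a::comm_ring_1"
  shows "det (mat n n (\<lambda>(i,j). a i * b j * e i j))
       = prod a {0..<n} * prod b {0..<n} * det (mat n n (\<lambda>(i,j). e i j))"
proof -
  have c1: "mat n n (\<lambda>(i,j). a i * b j * e i j) \<in> carrier_mat n n" by simp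
  have c2: "mat n n (\<lambda>(i,j). e i j) \<in> carrier_mat n n" by simp
  show ?thesis
    unfolding det_def'[OF c1] det_def'[OF c2] sum_distrib_left
  proof (rule sum.cong[OF refl])
    fix p assume "p \<in> {p. p permutes {0..<n}}"
    hence p: "p permutes {0..<n}" by simp
    have "(\<Prod>i = 0..<n. mat n n (\<lambda>(i,j). a i * b j * e i j) $$ (i, p i))
        = (\<Prod>i = 0..<n. a i * (b \<circ> p) i * e i (p i))"
      by (rule prod.cong, simp, insert p, auto simp: permutes_in_image)
    also have "\<dots> = prod a {0..<n} * prod (b \<circ> p) {0..<n} * (\<Prod>i = 0..<n. e i (p i))"
      by (simp add: prod.distrib)
    also have "prod (b \<circ> p) {0..<n} = prod b {0..<n}" by (rule prod.permute[OF p, symmetric])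
    also have "(\<Prod>i = 0..<n. e i (p i)) = (\<Prod>i = 0..<n. mat n n (\<lambda>(i,j). e i j) $$ (i, p i))"
      by (rule prod.cong, simp, insert p, auto simp: permutes_in_image)
    finally show "signof p * (\<Prod>i = 0..<n. mat n n (\<lambda>(i,j). a i * b j * e i j) $$ (i, p i))
      = prod a {0..<n} * prod b {0..<n} * (signof p * (\<Prod>i = 0..<n. mat n n (\<lambda>(i,j). e i j) $$ (i, p i)))"
      by (simp add: ac_simps)
  qed
qed

lemma det_add_last_row:
  fixes A :: "'a::comm_ring_1 mat"
  assumes A: "A \<in> carrier_mat (Suc n) (Suc n)"
  shows "det (mat (Suc n) (Suc n) (\<lambda>(i,j). A$$(i,j) + (if i < n then c i * A$$(n,j) else 0))) = det A"
proof -
  define P where "P = mat (Suc n) (Suc n) (\<lambda>(i,j). if i = j then 1 else if j = n then c i else (0::'a))"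
  have Pc: "P \<in> carrier_mat (Suc n) (Suc n)" unfolding P_def by simp
  have "det P = prod_list (diag_mat P)"
    by (rule det_upper_triangular[OF _ Pc], rule upper_triangularI, auto simp: P_def)
  also have "\<dots> = 1"
    unfolding prod_list_diag_prod using Pc by (simp add: P_def)
  finally have dP: "det P = 1" .
  have eq: "mat (Suc n) (Suc n) (\<lambda>(i,j). A$$(i,j) + (if i < n then c i * A$$(n,j) else 0)) = P * A"
  proof (rule eq_matI)
    fix i j assume i: "i < dim_row (P * A)" and j: "j < dim_col (P * A)"
    hence i': "i < Suc n" and j': "j < Suc n" using Pc A by auto
    have "(P * A) $$ (i,j) = (\<Sum>k\<in>{0..<Suc n}. P $$ (i,k) * A $$ (k,j))"
      using i' j' Pc A by (simp add: scalar_prod_def)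
    also have "\<dots> = (\<Sum>k\<in>{0..<Suc n}. (if k = i then A $$ (k,j) else 0)
                   + (if k = n then (if i < n then c i * A $$ (k,j) else 0) else 0))"
      by (rule sum.cong, simp, insert i', auto simp: P_def)
    also have "\<dots> = A$$(i,j) + (if i < n then c i * A$$(n,j) else 0)"
      using i' by (simp add: sum.distrib)
    finally show "mat (Suc n) (Suc n) (\<lambda>(i,j). A$$(i,j) + (if i < n then c i * A$$(n,j) else 0)) $$ (i,j) = (P * A) $$ (i,j)"
      using i' j' by simp
  qed (insert Pc A, auto)
  show ?thesis unfolding eq det_mult[OF Pc A] dP by simp
qed

lemma det_add_last_col:
  fixes A :: "'a::comm_ring_1 mat"
  assumes A: "A \<in> carrier_mat (Suc n) (Suc n)"
  shows "det (mat (Suc n) (Suc n) (\<lambda>(i,j). A$$(i,j) + (if j < n then c j * A$$(i,n) else 0))) = det A"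
proof -
  have At: "transpose_mat A \<in> carrier_mat (Suc n) (Suc n)" using A by simp
  have "mat (Suc n) (Suc n) (\<lambda>(i,j). A$$(i,j) + (if j < n then c j * A$$(i,n) else 0))
      = transpose_mat (mat (Suc n) (Suc n) (\<lambda>(i,j). (transpose_mat A)$$(i,j) + (if i < n then c i * (transpose_mat A)$$(n,j) else 0)))"
    by (rule eq_matI, insert A, auto)
  hence "det (mat (Suc n) (Suc n) (\<lambda>(i,j). A$$(i,j) + (if j < n then c j * A$$(i,n) else 0)))
     = det (mat (Suc n) (Suc n) (\<lambda>(i,j). (transpose_mat A)$$(i,j) + (if i < n then c i * (transpose_mat A)$$(n,j) else 0)))"
    by (simp only:) (rule det_transpose[OF mat_carrier])
  also have "\<dots> = det (transpose_mat A)" by (rule det_add_last_row[OF At])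
  also have "\<dots> = det A" by (rule det_transpose[OF A])
  finally show ?thesis .
qed

lemma det_last_row_unit:
  fixes E :: "'a::comm_ring_1 mat"
  assumes E: "E \<in> carrier_mat (Suc n) (Suc n)"
    and z: "\<And>j. j < n \<Longrightarrow> E $$ (n,j) = 0" and o: "E $$ (n,n) = 1"
  shows "det E = det (mat n n (\<lambda>(i,j). E $$ (i,j)))"
proof -
  have "det E = (\<Sum>j<Suc n. E $$ (n,j) * cofactor E n j)"
    by (rule laplace_expansion_row[OF E], simp)
  also have "\<dots> = cofactor E n n" using z o by simp
  also have "\<dots> = det (mat_delete E n n)" unfolding cofactor_def by simp
  also have "mat_delete E n n = mat n n (\<lambda>(i,j). E $$ (i,j))"
    by (rule eq_matI, insert E, auto simp: mat_delete_def)
  finally show ?thesis .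
qed



lemma cauchy_det:
  fixes x y :: "nat \<Rightarrow> 'a::field"
  assumes "\<And>i j. i < n \<Longrightarrow> j < n \<Longrightarrow> 1 - x i * y j \<noteq> 0"
  shows "det (mat n n (\<lambda>(i,j). 1 / (1 - x i * y j))) * (\<Prod>i<n. \<Prod>j<n. 1 - x i * y j)
       = (\<Prod>i<n. \<Prod>j\<in>{i<..<n}. (x i - x j) * (y i - y j))"
  using assms
proof (induction n)
  case 0
  then show ?case by simp
next
  case (Suc n)
  have nz: "\<And>i j. i \<le> n \<Longrightarrow> j \<le> n \<Longrightarrow> 1 - x i * y j \<noteq> 0" using Suc.prems by auto
  have IH: "det (mat n n (\<lambda>(i,j). 1 / (1 - x i * y j))) * (\<Prod>i<n. \<Prod>j<n. 1 - x i * y j)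
       = (\<Prod>i<n. \<Prod>j\<in>{i<..<n}. (x i - x j) * (y i - y j))"
    by (rule Suc.IH) (use Suc.prems in auto)
  define C where "C = mat (Suc n) (Suc n) (\<lambda>(i,j). 1 / (1 - x i * y j))"
  have Cc: "C \<in> carrier_mat (Suc n) (Suc n)" unfolding C_def by simp
  define E where "E = mat (Suc n) (Suc n) (\<lambda>(i,j). if i < n then y j / (1 - x i * y j) else 1)"
  have Ec: "E \<in> carrier_mat (Suc n) (Suc n)" unfolding E_def by simp
  have "det C = det (mat (Suc n) (Suc n) (\<lambda>(i,j). C$$(i,j) + (if i < n then (\<lambda>_. -1) i * C$$(n,j) else 0)))"
    by (rule det_add_last_row[OF Cc, symmetric])
  also have "mat (Suc n) (Suc n) (\<lambda>(i,j). C$$(i,j) + (if i < n then (\<lambda>_. -1) i * C$$(n,j) else 0))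
     = mat (Suc n) (Suc n) (\<lambda>(i,j). (\<lambda>i. if i < n then x i - x n else 1) i * (\<lambda>j. 1 / (1 - x n * y j)) j
           * (\<lambda>i j. if i < n then y j / (1 - x i * y j) else 1) i j)"
  proof (rule eq_matI)
    fix i j assume "i < dim_row (mat (Suc n) (Suc n) (\<lambda>(i,j). (\<lambda>i. if i < n then x i - x n else 1) i * (\<lambda>j. 1 / (1 - x n * y j)) j
           * (\<lambda>i j. if i < n then y j / (1 - x i * y j) else 1) i j))"
      "j < dim_col (mat (Suc n) (Suc n) (\<lambda>(i,j). (\<lambda>i. if i < n then x i - x n else 1) i * (\<lambda>j. 1 / (1 - x n * y j)) j
           * (\<lambda>i j. if i < n then y j / (1 - x i * y j) else 1) i j))"
    hence i: "i \<le> n" and j: "j \<le> n" by auto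
    have a: "1 - x i * y j \<noteq> 0" and b: "1 - x n * y j \<noteq> 0" using nz i j by auto
    show "mat (Suc n) (Suc n) (\<lambda>(i,j). C$$(i,j) + (if i < n then (\<lambda>_. -1) i * C$$(n,j) else 0)) $$ (i,j)
      = mat (Suc n) (Suc n) (\<lambda>(i,j). (\<lambda>i. if i < n then x i - x n else 1) i * (\<lambda>j. 1 / (1 - x n * y j)) j
           * (\<lambda>i j. if i < n then y j / (1 - x i * y j) else 1) i j) $$ (i,j)"
    proof (cases "i < n")
      case True
      then show ?thesis using i j aux1[OF a b] unfolding C_def by simp
    next
      case False
      then have "i = n" using i by simp
      then show ?thesis using j b unfolding C_def by simp
    qed
  qed auto
  also have "det \<dots> = prod (\<lambda>i. if i < n then x i - x n else 1) {0..<Suc n}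
        * prod (\<lambda>j. 1 / (1 - x n * y j)) {0..<Suc n} * det E"
    unfolding E_def by (rule det_scale)
  also have "det E = det (mat (Suc n) (Suc n) (\<lambda>(i,j). E$$(i,j) + (if j < n then (\<lambda>_. -1) j * E$$(i,n) else 0)))"
    by (rule det_add_last_col[OF Ec, symmetric])
  also have "\<dots> = det (mat n n (\<lambda>(i,j). (mat (Suc n) (Suc n) (\<lambda>(i,j). E$$(i,j) + (if j < n then (\<lambda>_. -1) j * E$$(i,n) else 0))) $$ (i,j)))"
    by (rule det_last_row_unit, auto simp: E_def)
  also have "mat n n (\<lambda>(i,j). (mat (Suc n) (Suc n) (\<lambda>(i,j). E$$(i,j) + (if j < n then (\<lambda>_. -1) j * E$$(i,n) else 0))) $$ (i,j))
     = mat n n (\<lambda>(i,j). (\<lambda>i. 1 / (1 - x i * y n)) i * (\<lambda>j. y j - y n) j * (\<lambda>i j. 1 / (1 - x i * y j)) i j)"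
  proof (rule eq_matI)
    fix i j assume "i < dim_row (mat n n (\<lambda>(i,j). (\<lambda>i. 1 / (1 - x i * y n)) i * (\<lambda>j. y j - y n) j * (\<lambda>i j. 1 / (1 - x i * y j)) i j))"
      "j < dim_col (mat n n (\<lambda>(i,j). (\<lambda>i. 1 / (1 - x i * y n)) i * (\<lambda>j. y j - y n) j * (\<lambda>i j. 1 / (1 - x i * y j)) i j))"
    hence i: "i < n" and j: "j < n" by auto
    have a: "1 - x i * y j \<noteq> 0" and b: "1 - x i * y n \<noteq> 0" using nz i j by auto
    show "mat n n (\<lambda>(i,j). (mat (Suc n) (Suc n) (\<lambda>(i,j). E$$(i,j) + (if j < n then (\<lambda>_. -1) j * E$$(i,n) else 0))) $$ (i,j)) $$ (i,j)
     = mat n n (\<lambda>(i,j). (\<lambda>i. 1 / (1 - x i * y n)) i * (\<lambda>j. y j - y n) j * (\<lambda>i j. 1 / (1 - x i * y j)) i j) $$ (i,j)"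
      using i j aux2[OF a b] unfolding E_def by simp
  qed auto
  also have "det \<dots> = prod (\<lambda>i. 1 / (1 - x i * y n)) {0..<n} * prod (\<lambda>j. y j - y n) {0..<n}
      * det (mat n n (\<lambda>(i,j). 1 / (1 - x i * y j)))"
    by (rule det_scale)
  finally have dC0: "det C = prod (\<lambda>i. if i < n then x i - x n else 1) {0..<Suc n}
        * prod (\<lambda>j. 1 / (1 - x n * y j)) {0..<Suc n} * (prod (\<lambda>i. 1 / (1 - x i * y n)) {0..<n} * prod (\<lambda>j. y j - y n) {0..<n}
      * det (mat n n (\<lambda>(i,j). 1 / (1 - x i * y j))))" .
  define A where "A = (\<Prod>i<n. x i - x n)"
  define Bv where "Bv = (\<Prod>i<n. y i - y n)"
  define P1 where "P1 = (\<Prod>j<Suc n. 1 / (1 - x n * y j))"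
  define R1 where "R1 = (\<Prod>j<Suc n. 1 - x n * y j)"
  define P2 where "P2 = (\<Prod>i<n. 1 / (1 - x i * y n))"
  define R2 where "R2 = (\<Prod>i<n. 1 - x i * y n)"
  define D where "D = det (mat n n (\<lambda>(i,j). 1 / (1 - x i * y j)))"
  define Qn where "Qn = (\<Prod>i<n. \<Prod>j<n. 1 - x i * y j)"
  define Pn where "Pn = (\<Prod>i<n. \<Prod>j\<in>{i<..<n}. (x i - x j) * (y i - y j))"
  have pa: "prod (\<lambda>i. if i < n then x i - x n else 1) {0..<Suc n} = A"
    unfolding A_def atLeast0LessThan prod.lessThan_Suc by simp
  have dC: "det C = A * P1 * (P2 * Bv * D)"
    unfolding dC0 pa unfolding P1_def P2_def Bv_def D_def atLeast0LessThan ..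
  have Q: "(\<Prod>i<Suc n. \<Prod>j<Suc n. 1 - x i * y j) = Qn * R2 * R1"
    unfolding Qn_def R2_def R1_def by (simp add: prod.distrib)
  have P: "(\<Prod>i<Suc n. \<Prod>j\<in>{i<..<Suc n}. (x i - x j) * (y i - y j)) = Pn * A * Bv"
  proof -
    have "(\<Prod>i<Suc n. \<Prod>j\<in>{i<..<Suc n}. (x i - x j) * (y i - y j))
        = (\<Prod>i<n. \<Prod>j\<in>{i<..<Suc n}. (x i - x j) * (y i - y j))"
    proof -
      have "{n<..<Suc n} = {}" by auto
      then show ?thesis by (simp only: prod.lessThan_Suc prod.empty mult_1_right)
    qed
    also have "\<dots> = (\<Prod>i<n. (\<Prod>j\<in>{i<..<n}. (x i - x j) * (y i - y j)) * ((x i - x n) * (y i - y n)))"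
    proof (rule prod.cong[OF refl])
      fix i assume "i \<in> {..<n}"
      hence "{i<..<Suc n} = insert n {i<..<n}" by auto
      thus "(\<Prod>j\<in>{i<..<Suc n}. (x i - x j) * (y i - y j)) = (\<Prod>j\<in>{i<..<n}. (x i - x j) * (y i - y j)) * ((x i - x n) * (y i - y n))"
        by simp
    qed
    also have "\<dots> = Pn * A * Bv" unfolding Pn_def A_def Bv_def
      by (simp only: prod.distrib[of "\<lambda>i. \<Prod>j\<in>{i<..<n}. (x i - x j) * (y i - y j)" "\<lambda>i. (x i - x n) * (y i - y n)"]
          prod.distrib[of "\<lambda>i. x i - x n" "\<lambda>i. y i - y n"] mult.assoc)
    finally show ?thesis .
  qed
  have one1: "P1 * R1 = 1"
    unfolding P1_def R1_def prod.distrib[symmetric] by (rule prod.neutral, use nz in auto)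
  have one2: "P2 * R2 = 1"
    unfolding P2_def R2_def prod.distrib[symmetric] by (rule prod.neutral, use nz in auto)
  have IH': "D * Qn = Pn" using IH unfolding D_def Qn_def Pn_def .
  have "det C * (\<Prod>i<Suc n. \<Prod>j<Suc n. 1 - x i * y j) = A * Bv * (D * Qn) * (P1 * R1) * (P2 * R2)"
    unfolding dC Q by (simp only: ac_simps)
  also have "\<dots> = (\<Prod>i<Suc n. \<Prod>j\<in>{i<..<Suc n}. (x i - x j) * (y i - y j))"
    unfolding one1 one2 IH' P by (simp only: ac_simps mult_1_right mult_1_left)
  finally show ?case unfolding C_def .
qed


lemma entry:
  fixes q \<gamma> s \<xi> w v u :: complex
  assumes "q \<noteq> 0" "\<gamma> \<noteq> 0" "s \<noteq> 0" "\<xi> \<noteq> 0" "w \<noteq> 0"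
    and d1: "1 - u * v \<noteq> 0" and d2: "1 - q * u * v \<noteq> 0" and u: "u = inverse (s * \<xi> * \<gamma>) * w"
  shows "zfun q \<gamma> s \<xi> u v = (1 - w) * (1 - \<gamma>^2 * s^2 / w) * (1 / (1 - u * v))
     + (q * w) * ((1 - \<gamma> * inverse w) * (1 - s^2 * \<gamma> * inverse (q * w))) * (1 / (1 - q * u * v))"
proof -
  define t where "t = inverse w"
  have wt: "w * t = 1" using assms unfolding t_def by simp
  have e1: "\<gamma> * \<xi> * s * u = w" using assms by (simp add: field_simps)
  have e2: "\<gamma> * inverse \<xi> * s = \<gamma>^2 * s^2 * t * u" using assms unfolding t_def by (simp add: field_simps power2_eq_square)
  have e3: "\<gamma>^2 * s^2 / w = \<gamma>^2 * s^2 * t" unfolding t_def by (simp add: field_simps)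
  have e4: "(q * w) * ((1 - \<gamma> * inverse w) * (1 - s^2 * \<gamma> * inverse (q * w))) = (w - \<gamma>) * (q - s^2 * \<gamma> * t)"
    using assms unfolding t_def by (simp add: field_simps)
  have num: "(1 - \<gamma>) * (q - \<gamma> * s\<^sup>2) * (1 - u * v) + (1 - q) * (1 - w) * (1 - \<gamma>^2 * s^2 * t * u * v)
      = (1 - w) * (1 - \<gamma>^2 * s^2 * t) * (1 - q * u * v) + (w - \<gamma>) * (q - s^2 * \<gamma> * t) * (1 - u * v)"
  proof -
    have "(1 - \<gamma>) * (q - \<gamma> * s\<^sup>2) * (1 - u * v) + (1 - q) * (1 - w) * (1 - \<gamma>^2 * s^2 * t * u * v)
      = (1 - w) * (1 - \<gamma>^2 * s^2 * t) * (1 - q * u * v) + (w - \<gamma>) * (q - s^2 * \<gamma> * t) * (1 - u * v)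
        + (w * t - 1) * (\<gamma> * s^2 * (1 - \<gamma>) * (1 - u * v))"
      by (simp add: algebra_simps power2_eq_square)
    then show ?thesis using wt by simp
  qed
  have "zfun q \<gamma> s \<xi> u v = ((1 - \<gamma>) * (q - \<gamma> * s\<^sup>2) * (1 - u * v)
      + (1 - q) * (1 - w) * (1 - \<gamma>^2 * s^2 * t * u * v)) / ((1 - u * v) * (1 - q * u * v))"
    unfolding zfun_def e1 e2 by (simp add: mult.assoc)
  also have "\<dots> = ((1 - w) * (1 - \<gamma>^2 * s^2 * t) * (1 - q * u * v) + (w - \<gamma>) * (q - s^2 * \<gamma> * t) * (1 - u * v)) / ((1 - u * v) * (1 - q * u * v))"
    unfolding num ..
  also have "\<dots> = (1 - w) * (1 - \<gamma>^2 * s^2 * t) * (1 / (1 - u * v)) + (w - \<gamma>) * (q - s^2 * \<gamma> * t) * (1 / (1 - q * u * v))"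
    using d1 d2 by (simp add: add_divide_distrib)
  finally show ?thesis unfolding e3 e4 .
qed


theorem mainTheorem3:
  fixes N :: nat and q \<gamma> s0 \<xi>0 :: complex and u v :: "nat \<Rightarrow> complex"
  assumes "N \<ge> 1"
    and "q \<noteq> 0" "\<gamma> \<noteq> 0" "s0 \<noteq> 0" "\<xi>0 \<noteq> 0"
    and u_def: "\<And>i. u i = inverse (s0 * \<xi>0 * \<gamma>) * q ^ i"
    and "\<And>i j. i < N \<Longrightarrow> j < N \<Longrightarrow> 1 - u i * v j \<noteq> 0"
    and "\<And>i j. i < N \<Longrightarrow> j < N \<Longrightarrow> 1 - q * u i * v j \<noteq> 0"
    and "\<And>i j. i < j \<Longrightarrow> j < N \<Longrightarrow> u i \<noteq> u j"
    and "\<And>i j. i < j \<Longrightarrow> j < N \<Longrightarrow> v i \<noteq> v j"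
  shows "(\<Prod>i<N. \<Prod>j<N. (1 - u i * v j) * (1 - q * u i * v j))
           / (\<Prod>i<N. \<Prod>j\<in>{i<..<N}. (u i - u j) * (v i - v j))
           * det (mat N N (\<lambda>(i, j). zfun q \<gamma> s0 \<xi>0 (u i) (v j)))
         = q ^ (N\<^sup>2)
           * (\<Prod>i<N. \<Prod>j<N. (1 - v i * q ^ j / (s0 * \<xi>0 * \<gamma>)))
           * (\<Prod>j<N. (1 - \<gamma> * q powi (- int j)) * (1 - s0\<^sup>2 * \<gamma> * q powi (- int j - 1)))"
proof -
  note d1 = assms(7) and d2 = assms(8)
  define \<alpha> where "\<alpha> i = (1 - q^i) * (1 - \<gamma>^2 * s0^2 / q^i)" for i :: nat
  define \<beta> where "\<beta> i = (q * q^i) * ((1 - \<gamma> * inverse (q^i)) * (1 - s0^2 * \<gamma> * inverse (q * q^i)))" for i :: nat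
  have ent: "zfun q \<gamma> s0 \<xi>0 (u i) (v j) = \<alpha> i * (1 / (1 - u i * v j)) + \<beta> i * (1 / (1 - q * u i * v j))"
    if "i < N" "j < N" for i j
    unfolding \<alpha>_def \<beta>_def
    by (rule entry, use assms that in auto)
  define B where "B = mat N N (\<lambda>(i,k). if k = i then \<beta> i else if Suc k = i then \<alpha> i else 0)"
  define F where "F = mat N N (\<lambda>(k,j). 1 / (1 - (q * u k) * v j))"
  have Bc: "B \<in> carrier_mat N N" and Fc: "F \<in> carrier_mat N N" unfolding B_def F_def by auto
  have ZBF: "mat N N (\<lambda>(i, j). zfun q \<gamma> s0 \<xi>0 (u i) (v j)) = B * F"
  proof (rule eq_matI)
    fix i j assume "i < dim_row (B * F)" "j < dim_col (B * F)"
    hence i: "i < N" and j: "j < N" using Bc Fc by auto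
    have "(B * F) $$ (i,j) = (\<Sum>k\<in>{0..<N}. B $$ (i,k) * F $$ (k,j))"
      using i j Bc Fc by (simp add: scalar_prod_def)
    also have "\<dots> = (\<Sum>k\<in>{0..<N}. (if k = i then \<beta> i * F $$ (k,j) else 0)
                   + (if Suc k = i then \<alpha> i * F $$ (k,j) else 0))"
      by (rule sum.cong, simp, insert i, auto simp: B_def)
    also have "\<dots> = \<beta> i * (1 / (1 - q * u i * v j)) + \<alpha> i * (1 / (1 - u i * v j))"
    proof (cases i)
      case 0
      then show ?thesis using i j by (simp add: sum.distrib F_def \<alpha>_def)
    next
      case (Suc m)
      have "u i = q * u m" unfolding Suc u_def by simp
      then show ?thesis using i j Suc by (simp add: sum.distrib F_def)
    qed
    finally show "mat N N (\<lambda>(i, j). zfun q \<gamma> s0 \<xi>0 (u i) (v j)) $$ (i,j) = (B * F) $$ (i,j)"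
      using i j ent[OF i j] by simp
  qed (insert Bc Fc, auto)
  have dB: "det B = (\<Prod>i<N. \<beta> i)"
  proof -
    have "det B = prod_list (diag_mat B)"
      by (rule det_lower_triangular[OF _ Bc], auto simp: B_def)
    also have "\<dots> = (\<Prod>i<N. \<beta> i)"
      unfolding prod_list_diag_prod using Bc by (simp add: B_def atLeast0LessThan)
    finally show ?thesis .
  qed
  define Q1 where "Q1 = (\<Prod>i<N. \<Prod>j<N. 1 - u i * v j)"
  define Q2 where "Q2 = (\<Prod>i<N. \<Prod>j<N. 1 - q * u i * v j)"
  define V where "V = (\<Prod>i<N. \<Prod>j\<in>{i<..<N}. (u i - u j) * (v i - v j))"
  define PQ where "PQ = (\<Prod>i<N. q ^ (N - Suc i))"
  have Q2nz: "Q2 \<noteq> 0" unfolding Q2_def using d2 by (auto simp: prod_zero_iff)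
  have Vnz: "V \<noteq> 0" unfolding V_def using assms(9,10) by (auto simp: prod_zero_iff)
  have cau: "det F * Q2 = (\<Prod>i<N. \<Prod>j\<in>{i<..<N}. (q * u i - q * u j) * (v i - v j))"
    unfolding F_def Q2_def by (rule cauchy_det, use d2 in \<open>auto simp: mult.assoc\<close>)
  also have "\<dots> = (\<Prod>i<N. q ^ (N - Suc i) * (\<Prod>j\<in>{i<..<N}. (u i - u j) * (v i - v j)))"
  proof (rule prod.cong[OF refl])
    fix i assume "i \<in> {..<N}"
    have "(\<Prod>j\<in>{i<..<N}. (q * u i - q * u j) * (v i - v j)) = (\<Prod>j\<in>{i<..<N}. q * ((u i - u j) * (v i - v j)))"
      by (simp add: algebra_simps)
    also have "\<dots> = q ^ card {i<..<N} * (\<Prod>j\<in>{i<..<N}. (u i - u j) * (v i - v j))"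
      by (simp add: prod.distrib)
    finally show "(\<Prod>j\<in>{i<..<N}. (q * u i - q * u j) * (v i - v j)) = q ^ (N - Suc i) * (\<Prod>j\<in>{i<..<N}. (u i - u j) * (v i - v j))"
      by simp
  qed
  also have "\<dots> = PQ * V" unfolding PQ_def V_def by (simp add: prod.distrib)
  finally have cau2: "det F * Q2 = PQ * V" .
  have LHSprod: "(\<Prod>i<N. \<Prod>j<N. (1 - u i * v j) * (1 - q * u i * v j)) = Q1 * Q2"
    unfolding Q1_def Q2_def by (simp add: prod.distrib)
  have "(\<Prod>i<N. \<Prod>j<N. (1 - u i * v j) * (1 - q * u i * v j)) / V * det (mat N N (\<lambda>(i, j). zfun q \<gamma> s0 \<xi>0 (u i) (v j)))
      = Q1 * (\<Prod>i<N. \<beta> i) * ((det F * Q2) / V)"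
    unfolding LHSprod ZBF det_mult[OF Bc Fc] dB by (simp add: field_simps)
  also have "\<dots> = Q1 * (\<Prod>i<N. \<beta> i) * PQ" unfolding cau2 using Vnz by simp
  finally have Lm: "(\<Prod>i<N. \<Prod>j<N. (1 - u i * v j) * (1 - q * u i * v j)) / V * det (mat N N (\<lambda>(i, j). zfun q \<gamma> s0 \<xi>0 (u i) (v j)))
      = Q1 * (\<Prod>i<N. \<beta> i) * PQ" .
  have Pb: "(\<Prod>i<N. \<beta> i) = (\<Prod>i<N. q ^ Suc i) * (\<Prod>j<N. (1 - \<gamma> * q powi (- int j)) * (1 - s0\<^sup>2 * \<gamma> * q powi (- int j - 1)))"
  proof -
    have "(\<Prod>i<N. \<beta> i) = (\<Prod>i<N. q ^ Suc i * ((1 - \<gamma> * q powi (- int i)) * (1 - s0\<^sup>2 * \<gamma> * q powi (- int i - 1))))"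
    proof (rule prod.cong[OF refl])
      fix i
      have "- int i - 1 = - int (Suc i)" by simp
      then show "\<beta> i = q ^ Suc i * ((1 - \<gamma> * q powi (- int i)) * (1 - s0\<^sup>2 * \<gamma> * q powi (- int i - 1)))"
        unfolding \<beta>_def by (simp only: power_int_minus power_int_of_nat power_Suc)
    qed
    then show ?thesis by (simp add: prod.distrib)
  qed
  have Pq: "PQ * (\<Prod>i<N. q ^ Suc i) = q ^ (N\<^sup>2)"
  proof -
    have "PQ * (\<Prod>i<N. q ^ Suc i) = (\<Prod>i<N. q ^ N)"
      unfolding PQ_def prod.distrib[symmetric]
    proof (rule prod.cong[OF refl])
      fix i assume "i \<in> {..<N}"
      then have "N - Suc i + Suc i = N" by simp
      then show "q ^ (N - Suc i) * q ^ Suc i = q ^ N" by (metis power_add)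
    qed
    also have "\<dots> = q ^ (N\<^sup>2)" by (simp add: power2_eq_square power_mult)
    finally show ?thesis .
  qed
  have Q1': "Q1 = (\<Prod>i<N. \<Prod>j<N. (1 - v i * q ^ j / (s0 * \<xi>0 * \<gamma>)))"
    unfolding Q1_def
    by (subst prod.swap, rule prod.cong[OF refl], rule prod.cong[OF refl], simp add: u_def field_simps)
  show ?thesis
    unfolding V_def[symmetric] Lm Pb Q1'[symmetric] Pq[symmetric] by (simp only: ac_simps)
qed

end
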